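(* Let $s,n,k$ be positive integers, $\Gamma=\mathbb{Z}_{sn}\mathbin{\mathrm{wr}}\mathbb{Z}^k$, $G=\mathbb{Z}_n\mathbin{\mathrm{wr}}\mathbb{Z}^k$, with torsion subgroups $\Sigma$ and $\Omega$ respectively, and let $\Pi\colon\Gamma\to G$ and $\pi\colon\Sigma\to\Omega$ be the coefficient-reduction maps (defined in the context). Let $\varphi$ be an automorphism of $\Gamma$. Then there exists an automorphism $\psi$ of $G$ such that $\Pi\circ\varphi=\psi\circ\Pi$, $\pi\circ\varphi'=\psi'\circ\pi$ and $\overline{\varphi}=\overline{\psi}$. Moreover, $R(\varphi)\ge R(\psi)$.
   Context: For a positive integer $m$, $\mathbb{Z}_m\mathbin{\mathrm{wr}}\mathbb{Z}^k=\bigoplus_{x\in\mathbb{Z}^k}(\mathbb{Z}_m)_x\rtimes_\alpha\mathbb{Z}^k$ is the restricted wreath product, where $\alpha(z)$ maps $(\mathbb{Z}_m)_x$ onto $(\mathbb{Z}_m)_{z+x}$; its torsion subgroup is $\bigoplus_x(\mathbb{Z}_m)_x$, which is characteristic. For an automorphism $\varphi$, $\varphi'$ denotes its restriction to the torsion subgroup and $\overline{\varphi}$ the induced automorphism of the quotient $\mathbb{Z}^k$. With $\Delta_x,\delta_x$ the generators of $(\mathbb{Z}_{sn})_x$, $(\mathbb{Z}_n)_x$: $\pi(\sum_i k_i\Delta_{x_i})=\sum_i (k_i\bmod n)\delta_{x_i}$ and $\Pi(\sigma,z)=(\pi(\sigma),z)$. Two elements $g_1,g_2$ are $\varphi$-twisted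 conjugate if $g_1=hg_2\varphi(h^{-1})$ for some $h$; $R(\varphi)$ is the number of such classes (Reidemeister number). *)

theory Defs
  imports "HOL-Algebra.Group" "HOL-Library.Extended_Nat"
begin

text \<open>The group Z^k, realised as integer vectors indexed by nat that vanish
  at indices >= k.\<close>
definition zk :: "nat \<Rightarrow> (nat \<Rightarrow> int) set" where
  "zk k = {z. \<forall>i\<ge>k. z i = 0}"

text \<open>Torsion part: finitely supported functions Z^k -> Z_m, with Z_m
  represented by the residues {0..<m}.\<close>
definition sigma :: "nat \<Rightarrow> nat \<Rightarrow> ((nat \<Rightarrow> int) \<Rightarrow> int) set" where
  "sigma m k = {\<sigma>. (\<forall>x. \<sigma> x \<in> {0..<int m}) \<and> finite {x. \<sigma> x \<noteq> 0}
                   \<and> {x. \<sigma> x \<noteq> 0} \<subseteq> zk k}"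

text \<open>Shift action alpha(z): sends the generator at x to the generator at z+x.\<close>
definition shift :: "nat \<Rightarrow> (nat \<Rightarrow> int) \<Rightarrow> ((nat \<Rightarrow> int) \<Rightarrow> int) \<Rightarrow> ((nat \<Rightarrow> int) \<Rightarrow> int)" where
  "shift m z \<sigma> = (\<lambda>x. \<sigma> (\<lambda>i. x i - z i) mod int m)"

definition wr :: "nat \<Rightarrow> nat \<Rightarrow> (((nat \<Rightarrow> int) \<Rightarrow> int) \<times> (nat \<Rightarrow> int)) monoid" where
  "wr m k = \<lparr> carrier = sigma m k \<times> zk k,
      mult = (\<lambda>(\<sigma>1, z1) (\<sigma>2, z2).
                 ((\<lambda>x. (\<sigma>1 x + shift m z1 \<sigma>2 x) mod int m), (\<lambda>i. z1 i + z2 i))),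
      one = ((\<lambda>x. 0), (\<lambda>i. 0)) \<rparr>"

text \<open>Coefficient reduction pi : Sigma -> Omega and Pi = pi x id.\<close>
definition red :: "nat \<Rightarrow> ((nat \<Rightarrow> int) \<Rightarrow> int) \<Rightarrow> ((nat \<Rightarrow> int) \<Rightarrow> int)" where
  "red n \<sigma> = (\<lambda>x. \<sigma> x mod int n)"

definition Red :: "nat \<Rightarrow> ((nat \<Rightarrow> int) \<Rightarrow> int) \<times> (nat \<Rightarrow> int) \<Rightarrow> ((nat \<Rightarrow> int) \<Rightarrow> int) \<times> (nat \<Rightarrow> int)" where
  "Red n g = (red n (fst g), snd g)"

text \<open>phi' : restriction of phi to the torsion subgroup {(sigma,0)}.\<close>
definition tors :: "(((nat \<Rightarrow> int) \<Rightarrow> int) \<times> (nat \<Rightarrow> int) \<Rightarrow> ((nat \<Rightarrow> int) \<Rightarrow> int) \<times> (nat \<Rightarrow> int))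
                    \<Rightarrow> ((nat \<Rightarrow> int) \<Rightarrow> int) \<Rightarrow> ((nat \<Rightarrow> int) \<Rightarrow> int)" where
  "tors \<phi> \<sigma> = fst (\<phi> (\<sigma>, (\<lambda>i. 0)))"

text \<open>phi-bar : induced automorphism of the quotient Z^k (quotient map = snd).\<close>
definition bar :: "(((nat \<Rightarrow> int) \<Rightarrow> int) \<times> (nat \<Rightarrow> int) \<Rightarrow> ((nat \<Rightarrow> int) \<Rightarrow> int) \<times> (nat \<Rightarrow> int))
                    \<Rightarrow> (nat \<Rightarrow> int) \<Rightarrow> (nat \<Rightarrow> int)" where
  "bar \<phi> z = snd (\<phi> ((\<lambda>x. 0), z))"

definition twisted_conj :: "('a, 'b) monoid_scheme \<Rightarrow> ('a \<Rightarrow> 'a) \<Rightarrow> ('a \<times> 'a) set" where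
  "twisted_conj G \<phi> = {(g1, g2). g1 \<in> carrier G \<and> g2 \<in> carrier G \<and>
      (\<exists>h\<in>carrier G. g1 = h \<otimes>\<^bsub>G\<^esub> g2 \<otimes>\<^bsub>G\<^esub> inv\<^bsub>G\<^esub> (\<phi> h))}"

definition reidemeister :: "('a, 'b) monoid_scheme \<Rightarrow> ('a \<Rightarrow> 'a) \<Rightarrow> enat" where
  "reidemeister G \<phi> = (let C = carrier G // twisted_conj G \<phi> in
      if finite C then enat (card C) else \<infinity>)"

end

theory Submission
  imports Defs
begin

lemma zk_add: "a \<in> zk k \<Longrightarrow> b \<in> zk k \<Longrightarrow> (\<lambda>i. a i + b i) \<in> zk k"
  by (simp add: zk_def)
lemma zk_diff: "a \<in> zk k \<Longrightarrow> b \<in> zk k \<Longrightarrow> (\<lambda>i. a i - b i) \<in> zk k"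
  by (simp add: zk_def)
lemma zk_uminus: "a \<in> zk k \<Longrightarrow> (\<lambda>i. - a i) \<in> zk k"
  by (simp add: zk_def)
lemma zk_zero: "(\<lambda>i. 0) \<in> zk k"
  by (simp add: zk_def)

lemma sigma_add:
  assumes m: "m > 0" and a: "a \<in> sigma m k" and b: "b \<in> sigma m k"
  shows "(\<lambda>x. (a x + b x) mod int m) \<in> sigma m k"
proof -
  have sub: "{x. (a x + b x) mod int m \<noteq> 0} \<subseteq> {x. a x \<noteq> 0} \<union> {x. b x \<noteq> 0}" by auto
  have f: "finite {x. (a x + b x) mod int m \<noteq> 0}"
    using a b sub unfolding sigma_def by (auto intro: finite_subset)
  have z: "{x. (a x + b x) mod int m \<noteq> 0} \<subseteq> zk k"
    using a b sub unfolding sigma_def by blast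
  show ?thesis using f z m unfolding sigma_def by auto
qed

lemma sigma_shift:
  assumes m: "m > 0" and a: "a \<in> sigma m k" and z: "z \<in> zk k"
  shows "shift m z a \<in> sigma m k"
proof -
  have sub: "{x. shift m z a x \<noteq> 0} \<subseteq> (\<lambda>y. (\<lambda>i. y i + z i)) ` {x. a x \<noteq> 0}"
  proof
    fix x assume "x \<in> {x. shift m z a x \<noteq> 0}"
    then have "a (\<lambda>i. x i - z i) \<noteq> 0" by (auto simp: shift_def)
    moreover have "x = (\<lambda>i. (\<lambda>i. x i - z i) i + z i)" by auto
    ultimately show "x \<in> (\<lambda>y. (\<lambda>i. y i + z i)) ` {x. a x \<noteq> 0}" by (intro image_eqI[where x="\<lambda>i. x i - z i"]) auto
  qed
  have fin: "finite {x. shift m z a x \<noteq> 0}"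
    using a sub by (auto simp: sigma_def intro: finite_subset)
  have "{x. shift m z a x \<noteq> 0} \<subseteq> zk k"
  proof
    fix x assume "x \<in> {x. shift m z a x \<noteq> 0}"
    then obtain y where "y \<in> {x. a x \<noteq> 0}" "x = (\<lambda>i. y i + z i)" using sub by blast
    then show "x \<in> zk k" using a z by (auto simp: sigma_def zk_def)
  qed
  then show ?thesis using fin m by (auto simp: sigma_def shift_def)
qed

lemma sigma_neg:
  assumes m: "m > 0" and a: "a \<in> sigma m k" and z: "z \<in> zk k"
  shows "(\<lambda>x. (- a (\<lambda>i. x i + z i)) mod int m) \<in> sigma m k"
proof -
  have sub: "{x. (- a (\<lambda>i. x i + z i)) mod int m \<noteq> 0} \<subseteq> (\<lambda>y. (\<lambda>i. y i - z i)) ` {x. a x \<noteq> 0}"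
  proof
    fix x assume "x \<in> {x. (- a (\<lambda>i. x i + z i)) mod int m \<noteq> 0}"
    then have "a (\<lambda>i. x i + z i) \<noteq> 0" by auto
    moreover have "x = (\<lambda>i. (\<lambda>i. x i + z i) i - z i)" by auto
    ultimately show "x \<in> (\<lambda>y. (\<lambda>i. y i - z i)) ` {x. a x \<noteq> 0}" by (intro image_eqI[where x="\<lambda>i. x i + z i"]) auto
  qed
  have fin: "finite {x. (- a (\<lambda>i. x i + z i)) mod int m \<noteq> 0}"
    using a sub by (auto simp: sigma_def intro: finite_subset)
  have "{x. (- a (\<lambda>i. x i + z i)) mod int m \<noteq> 0} \<subseteq> zk k"
  proof
    fix x assume "x \<in> {x. (- a (\<lambda>i. x i + z i)) mod int m \<noteq> 0}"
    then obtain y where "y \<in> {x. a x \<noteq> 0}" "x = (\<lambda>i. y i - z i)" using sub by blast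
    then show "x \<in> zk k" using a z by (auto simp: sigma_def zk_def)
  qed
  then show ?thesis using fin m by (auto simp: sigma_def)
qed

lemma wr_mult: "(a, z) \<otimes>\<^bsub>wr m k\<^esub> (b, w) = ((\<lambda>x. (a x + shift m z b x) mod int m), (\<lambda>i. z i + w i))"
  by (simp add: wr_def)
lemma wr_one: "\<one>\<^bsub>wr m k\<^esub> = ((\<lambda>x. 0), (\<lambda>i. 0))"
  by (simp add: wr_def)
lemma wr_carrier: "carrier (wr m k) = sigma m k \<times> zk k"
  by (simp add: wr_def)

lemma sigma_mod: "a \<in> sigma m k \<Longrightarrow> a x mod int m = a x"
  by (auto simp: sigma_def)

lemma wr_group: assumes m: "m > 0" shows "group (wr m k)"
proof (rule groupI)
  fix x y assume "x \<in> carrier (wr m k)" "y \<in> carrier (wr m k)"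
  then show "x \<otimes>\<^bsub>wr m k\<^esub> y \<in> carrier (wr m k)"
    using m by (cases x, cases y) (auto simp: wr_mult wr_carrier zk_add sigma_add sigma_shift)
next
  show "\<one>\<^bsub>wr m k\<^esub> \<in> carrier (wr m k)"
    using m by (auto simp: wr_one wr_carrier sigma_def zk_def)
next
  fix x y z assume "x \<in> carrier (wr m k)" "y \<in> carrier (wr m k)" "z \<in> carrier (wr m k)"
  show "x \<otimes>\<^bsub>wr m k\<^esub> y \<otimes>\<^bsub>wr m k\<^esub> z = x \<otimes>\<^bsub>wr m k\<^esub> (y \<otimes>\<^bsub>wr m k\<^esub> z)"
  proof (cases x, cases y, cases z)
    fix a1 z1 a2 z2 a3 z3 assume xyz: "x = (a1, z1)" "y = (a2, z2)" "z = (a3, z3)"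
    have e: "(\<lambda>i. v i - (z1 i + z2 i)) = (\<lambda>i. (v i - z1 i) - z2 i)" for v
      by auto
    show ?thesis unfolding xyz wr_mult
      by (auto simp: shift_def e mod_simps add.assoc)
  qed
next
  fix x assume "x \<in> carrier (wr m k)"
  then show "\<one>\<^bsub>wr m k\<^esub> \<otimes>\<^bsub>wr m k\<^esub> x = x"
    by (cases x) (auto simp: wr_one wr_mult wr_carrier shift_def sigma_mod)
next
  fix x assume xc: "x \<in> carrier (wr m k)"
  show "\<exists>y\<in>carrier (wr m k). y \<otimes>\<^bsub>wr m k\<^esub> x = \<one>\<^bsub>wr m k\<^esub>"
  proof (cases x)
    fix a z assume x: "x = (a, z)"
    have a: "a \<in> sigma m k" and z: "z \<in> zk k" using xc x by (auto simp: wr_carrier)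
    let ?y = "((\<lambda>x. (- a (\<lambda>i. x i + z i)) mod int m), (\<lambda>i. - z i))"
    have e: "(\<lambda>i. v i - - z i) = (\<lambda>i. v i + z i)" for v by auto
    have "?y \<otimes>\<^bsub>wr m k\<^esub> x = \<one>\<^bsub>wr m k\<^esub>"
      unfolding x wr_mult wr_one by (auto simp: shift_def e mod_simps)
    moreover have "?y \<in> carrier (wr m k)"
      using a z m by (simp add: wr_carrier sigma_neg zk_uminus)
    ultimately show ?thesis by blast
  qed
qed

lemma pow_snd: "snd (g [^]\<^bsub>wr m k\<^esub> (j::nat)) = (\<lambda>i. int j * snd g i)"
proof (induction j)
  case 0 then show ?case by (simp add: wr_one)
next
  case (Suc j)
  obtain a z where g: "g [^]\<^bsub>wr m k\<^esub> j = (a, z)" by fastforce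
  obtain b w where g2: "g = (b, w)" by fastforce
  show ?case using Suc g unfolding g2 by (simp add: wr_mult algebra_simps)
qed

lemma pow_tors: "(a, (\<lambda>i. 0)) [^]\<^bsub>wr m k\<^esub> (j::nat) = ((\<lambda>x. int j * a x mod int m), (\<lambda>i. 0))"
proof (induction j)
  case 0 then show ?case by (simp add: wr_one)
next
  case (Suc j)
  show ?case using Suc by (simp add: wr_mult shift_def mod_simps algebra_simps)
qed

lemma Red_mult: "Red n (a \<otimes>\<^bsub>wr (s*n) k\<^esub> b) = Red n a \<otimes>\<^bsub>wr n k\<^esub> Red n b"
proof -
  obtain a1 z1 where a: "a = (a1, z1)" by fastforce
  obtain b1 z2 where b: "b = (b1, z2)" by fastforce
  have e: "x mod (int s * int n) mod int n = x mod int n" for x :: int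
    by (simp add: mod_mod_cancel)
  show ?thesis unfolding a b
    by (simp add: wr_mult Red_def red_def shift_def e mod_simps)
qed

lemma Red_carrier: assumes "n > 0" "g \<in> carrier (wr (s*n) k)" shows "Red n g \<in> carrier (wr n k)"
proof -
  obtain a z where g: "g = (a, z)" by fastforce
  have a: "a \<in> sigma (s*n) k" and z: "z \<in> zk k" using assms g by (auto simp: wr_carrier)
  have sub: "{x. a x mod int n \<noteq> 0} \<subseteq> {x. a x \<noteq> 0}" by auto
  have "red n a \<in> sigma n k"
    using a sub assms(1) unfolding sigma_def red_def by (auto intro: finite_subset)
  then show ?thesis using z g by (simp add: wr_carrier Red_def)
qed

lemma carrier_sub: assumes "s > 0" shows "carrier (wr n k) \<subseteq> carrier (wr (s*n) k)"
proof -
  have "n \<le> s * n" using assms by simp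
  then have le: "int n \<le> int (s * n)" by linarith
  have "sigma n k \<subseteq> sigma (s*n) k"
    unfolding sigma_def by (auto simp del: of_nat_mult) (meson le less_le_trans)
  then show ?thesis unfolding wr_carrier by auto
qed

lemma Red_id: assumes "g \<in> carrier (wr n k)" shows "Red n g = g"
  using assms by (cases g) (auto simp: wr_carrier Red_def red_def sigma_mod)

lemma Red_hom: assumes "n > 0" shows "Red n \<in> hom (wr (s*n) k) (wr n k)"
  using assms by (auto simp: hom_def Red_carrier Red_mult)

lemma Red_group_hom: assumes "s > 0" "n > 0" shows "group_hom (wr (s*n) k) (wr n k) (Red n)"
  using assms by (simp add: group_hom_def group_hom_axioms_def Red_hom wr_group)

lemma ker_pres:
  assumes s: "s > 0" and n: "n > 0" and phi: "\<phi> \<in> hom (wr (s*n) k) (wr (s*n) k)"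
    and t: "t \<in> carrier (wr (s*n) k)" and rt: "Red n t = \<one>\<^bsub>wr n k\<^esub>"
  shows "Red n (\<phi> t) = \<one>\<^bsub>wr n k\<^esub>"
proof -
  have sn: "s * n > 0" using s n by simp
  have grp: "group (wr (s*n) k)" using sn by (rule wr_group)
  obtain a z where tz: "t = (a, z)" by fastforce
  have z: "z = (\<lambda>i. 0)" and amod: "\<And>x. a x mod int n = 0"
    using rt unfolding tz by (auto simp: Red_def red_def wr_one fun_eq_iff)
  have a: "a \<in> sigma (s*n) k" using t tz by (simp add: wr_carrier)
  define u where "u = ((\<lambda>x. a x div int n), (\<lambda>i::nat. 0::int))"
  have sub: "{x. a x div int n \<noteq> 0} \<subseteq> {x. a x \<noteq> 0}" by auto
  have bnd: "0 \<le> a x div int n \<and> a x div int n < int (s*n)" for x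
  proof -
    have "0 \<le> a x" "a x < int (s*n)" using a by (auto simp: sigma_def)
    moreover have "a x div int n \<le> a x" using \<open>0 \<le> a x\<close> n
      by (cases "a x = 0") (auto intro: int_div_le_self)
    ultimately show ?thesis using n by (simp add: pos_imp_zdiv_nonneg_iff del: of_nat_mult)
  qed
  have uc: "u \<in> carrier (wr (s*n) k)"
    using a sub bnd unfolding u_def wr_carrier sigma_def
    by (auto simp: zk_def intro: finite_subset)
  have dv: "int n * (a x div int n) = a x" for x
    using amod[of x] by (simp add: dvd_imp_mod_0 mod_eq_0_iff_dvd)
  have un: "u [^]\<^bsub>wr (s*n) k\<^esub> n = t"
    unfolding u_def pow_tors tz z using a by (simp add: dv fun_eq_iff sigma_mod[OF a, simplified])
  have us: "u [^]\<^bsub>wr (s*n) k\<^esub> (s*n) = \<one>\<^bsub>wr (s*n) k\<^esub>"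
    unfolding u_def pow_tors by (simp add: wr_one)
  have pu: "\<phi> u \<in> carrier (wr (s*n) k)" using phi uc by (auto simp: hom_def)
  have "\<phi> u [^]\<^bsub>wr (s*n) k\<^esub> (s*n) = \<one>\<^bsub>wr (s*n) k\<^esub>"
    using hom_nat_pow[OF phi uc grp grp, of "s*n"] us hom_one[OF phi grp grp] by simp
  then have "snd (\<phi> u [^]\<^bsub>wr (s*n) k\<^esub> (s*n)) = (\<lambda>i. 0)" by (simp add: wr_one)
  then have "(\<lambda>i. int (s*n) * snd (\<phi> u) i) = (\<lambda>i. 0)" by (simp add: pow_snd)
  then have "snd (\<phi> u) = (\<lambda>i. 0)" using sn by (auto simp: fun_eq_iff)
  then obtain b where pub: "\<phi> u = (b, (\<lambda>i. 0))" by (metis prod.collapse)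
  have "\<phi> t = \<phi> u [^]\<^bsub>wr (s*n) k\<^esub> n"
    using hom_nat_pow[OF phi uc grp grp, of n] un by simp
  also have "\<dots> = ((\<lambda>x. int n * b x mod int (s*n)), (\<lambda>i. 0))"
    by (simp add: pub pow_tors)
  finally show ?thesis
    by (simp add: Red_def red_def wr_one mod_mod_cancel del: of_nat_mult)
qed

lemma welldef:
  assumes s: "s > 0" and n: "n > 0" and phi: "\<phi> \<in> hom (wr (s*n) k) (wr (s*n) k)"
    and x: "x \<in> carrier (wr (s*n) k)" and y: "y \<in> carrier (wr (s*n) k)"
    and r: "Red n x = Red n y"
  shows "Red n (\<phi> x) = Red n (\<phi> y)"
proof -
  interpret R: group_hom "wr (s*n) k" "wr n k" "Red n" using Red_group_hom[OF s n] .
  define t where "t = inv\<^bsub>wr (s*n) k\<^esub> y \<otimes>\<^bsub>wr (s*n) k\<^esub> x"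
  have tc: "t \<in> carrier (wr (s*n) k)" using x y by (simp add: t_def)
  have "Red n t = inv\<^bsub>wr n k\<^esub> (Red n y) \<otimes>\<^bsub>wr n k\<^esub> Red n x"
    using x y by (simp add: t_def)
  also have "\<dots> = \<one>\<^bsub>wr n k\<^esub>" using r y by simp
  finally have rt: "Red n t = \<one>\<^bsub>wr n k\<^esub>" .
  have xt: "x = y \<otimes>\<^bsub>wr (s*n) k\<^esub> t"
    using x y by (simp add: t_def R.G.m_assoc[symmetric])
  have "\<phi> x = \<phi> y \<otimes>\<^bsub>wr (s*n) k\<^esub> \<phi> t"
    using xt phi y tc by (simp add: hom_mult)
  moreover have "\<phi> y \<in> carrier (wr (s*n) k)" "\<phi> t \<in> carrier (wr (s*n) k)"
    using phi y tc by (auto simp: hom_def)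
  ultimately show ?thesis
    using ker_pres[OF s n phi tc rt] by simp
qed

lemma twisted_equiv:
  fixes G (structure)
  assumes G: "group G" and h: "h \<in> hom G G"
  shows "equiv (carrier G) (twisted_conj G h)"
proof -
  interpret group G by (rule G)
  interpret hh: group_hom G G h using G h by (simp add: group_hom_def group_hom_axioms_def)
  have hc: "x \<in> carrier G \<Longrightarrow> h x \<in> carrier G" for x using h by (auto simp: hom_def)
  show ?thesis
  proof (rule equivI)
    show "twisted_conj G h \<subseteq> carrier G \<times> carrier G" by (auto simp: twisted_conj_def)
  next
    show "refl_on (carrier G) (twisted_conj G h)"
    proof (rule refl_onI)
      fix x assume x: "x \<in> carrier G"
      then show "(x, x) \<in> twisted_conj G h"
        unfolding twisted_conj_def by (auto intro!: bexI[where x="\<one>"])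
    qed
  next
    show "sym (twisted_conj G h)"
    proof (rule symI)
      fix a b assume "(a, b) \<in> twisted_conj G h"
      then obtain c where a: "a \<in> carrier G" and b: "b \<in> carrier G" and c: "c \<in> carrier G"
        and e: "a = c \<otimes> b \<otimes> inv (h c)" unfolding twisted_conj_def by auto
      have "inv c \<otimes> a \<otimes> inv (h (inv c)) = inv c \<otimes> (c \<otimes> b \<otimes> inv (h c)) \<otimes> h c"
        using c hc[OF c] by (simp add: e)
      also have "\<dots> = b" using b c hc[OF c] by (simp add: m_assoc l_inv r_one m_assoc[symmetric, of "inv c" c])
      finally show "(b, a) \<in> twisted_conj G h"
        unfolding twisted_conj_def using a b c by (auto intro!: bexI[where x="inv c"])
    qed
  next
    show "trans (twisted_conj G h)"
    proof (rule transI)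
      fix a b d assume "(a, b) \<in> twisted_conj G h" "(b, d) \<in> twisted_conj G h"
      then obtain c c' where a: "a \<in> carrier G" and b: "b \<in> carrier G" and c: "c \<in> carrier G"
        and e: "a = c \<otimes> b \<otimes> inv (h c)" and d: "d \<in> carrier G" and c': "c' \<in> carrier G"
        and e': "b = c' \<otimes> d \<otimes> inv (h c')" unfolding twisted_conj_def by auto
      have "a = (c \<otimes> c') \<otimes> d \<otimes> inv (h (c \<otimes> c'))"
        using c c' d hc[OF c] hc[OF c'] by (simp add: e e' m_assoc inv_mult_group)
      then show "(a, d) \<in> twisted_conj G h"
        unfolding twisted_conj_def using a c c' d by (auto intro!: bexI[where x="c \<otimes> c'"])
    qed
  qed
qed

theorem theorem3p2:
  fixes s n k :: nat
    and \<phi> :: "((nat \<Rightarrow> int) \<Rightarrow> int) \<times> (nat \<Rightarrow> int) \<Rightarrow> ((nat \<Rightarrow> int) \<Rightarrow> int) \<times> (nat \<Rightarrow> int)"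
  assumes "s > 0" and "n > 0" and "k > 0"
    and "\<phi> \<in> iso (wr (s * n) k) (wr (s * n) k)"
  shows "\<exists>\<psi> \<in> iso (wr n k) (wr n k).
           (\<forall>g \<in> carrier (wr (s * n) k). Red n (\<phi> g) = \<psi> (Red n g))
         \<and> (\<forall>\<sigma> \<in> sigma (s * n) k. red n (tors \<phi> \<sigma>) = tors \<psi> (red n \<sigma>))
         \<and> (\<forall>z \<in> zk k. bar \<phi> z = bar \<psi> z)
         \<and> reidemeister (wr (s * n) k) \<phi> \<ge> reidemeister (wr n k) \<psi>"
proof -
  note s = assms(1) and n = assms(2) and iso = assms(4)
  have sn: "s * n > 0" using s n by simp
  interpret R: group_hom "wr (s*n) k" "wr n k" "Red n" using Red_group_hom[OF s n] .
  have phi: "\<phi> \<in> hom (wr (s*n) k) (wr (s*n) k)" using iso by (simp add: iso_def)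
  have bij: "bij_betw \<phi> (carrier (wr (s*n) k)) (carrier (wr (s*n) k))" using iso by (simp add: iso_def)
  have injp: "inj_on \<phi> (carrier (wr (s*n) k))" using bij by (simp add: bij_betw_def)
  have imp: "\<phi> ` carrier (wr (s*n) k) = carrier (wr (s*n) k)" using bij by (simp add: bij_betw_def)
  have pc: "\<And>x. x \<in> carrier (wr (s*n) k) \<Longrightarrow> \<phi> x \<in> carrier (wr (s*n) k)"
    using phi by (auto simp: hom_def)
  define \<phi>i where "\<phi>i = inv_into (carrier (wr (s*n) k)) \<phi>"
  have phii: "\<phi>i \<in> iso (wr (s*n) k) (wr (s*n) k)"
    unfolding \<phi>i_def by (rule R.G.iso_set_sym[OF iso])
  have phiih: "\<phi>i \<in> hom (wr (s*n) k) (wr (s*n) k)" using phii by (simp add: iso_def)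
  have csub: "carrier (wr n k) \<subseteq> carrier (wr (s*n) k)" by (rule carrier_sub[OF s])
  define \<psi> where "\<psi> = (\<lambda>g. Red n (\<phi> g))"
  have c1: "Red n (\<phi> g) = \<psi> (Red n g)" if g: "g \<in> carrier (wr (s*n) k)" for g
  proof -
    have rg: "Red n g \<in> carrier (wr (s*n) k)" using csub Red_carrier[OF n g] by blast
    show ?thesis unfolding \<psi>_def
      by (rule welldef[OF s n phi g rg]) (simp add: Red_id[OF Red_carrier[OF n g]])
  qed
  have psic: "\<psi> a \<in> carrier (wr n k)" if "a \<in> carrier (wr n k)" for a
    unfolding \<psi>_def using that csub pc Red_carrier[OF n] by blast
  have psihom: "\<psi> \<in> hom (wr n k) (wr n k)"
  proof (rule homI)
    fix a assume "a \<in> carrier (wr n k)" then show "\<psi> a \<in> carrier (wr n k)" by (rule psic)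
  next
    fix a b assume a: "a \<in> carrier (wr n k)" and b: "b \<in> carrier (wr n k)"
    have a': "a \<in> carrier (wr (s*n) k)" and b': "b \<in> carrier (wr (s*n) k)" using a b csub by auto
    have "a \<otimes>\<^bsub>wr n k\<^esub> b = Red n (a \<otimes>\<^bsub>wr (s*n) k\<^esub> b)"
      using a b by (simp add: Red_mult Red_id)
    then have "\<psi> (a \<otimes>\<^bsub>wr n k\<^esub> b) = Red n (\<phi> (a \<otimes>\<^bsub>wr (s*n) k\<^esub> b))"
      using c1[of "a \<otimes>\<^bsub>wr (s*n) k\<^esub> b"] a' b' by simp
    also have "\<dots> = \<psi> a \<otimes>\<^bsub>wr n k\<^esub> \<psi> b"
      using a' b' phi by (simp add: hom_mult \<psi>_def Red_mult)
    finally show "\<psi> (a \<otimes>\<^bsub>wr n k\<^esub> b) = \<psi> a \<otimes>\<^bsub>wr n k\<^esub> \<psi> b" .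
  qed
  have psiinj: "inj_on \<psi> (carrier (wr n k))"
  proof (rule inj_onI)
    fix a b assume a: "a \<in> carrier (wr n k)" and b: "b \<in> carrier (wr n k)" and e: "\<psi> a = \<psi> b"
    have a': "a \<in> carrier (wr (s*n) k)" and b': "b \<in> carrier (wr (s*n) k)" using a b csub by auto
    have "Red n (\<phi>i (\<phi> a)) = Red n (\<phi>i (\<phi> b))"
      by (rule welldef[OF s n phiih pc[OF a'] pc[OF b']]) (use e in \<open>simp add: \<psi>_def\<close>)
    then have "Red n a = Red n b" using a' b' injp by (simp add: \<phi>i_def)
    then show "a = b" using a b by (simp add: Red_id)
  qed
  have psisurj: "\<psi> ` carrier (wr n k) = carrier (wr n k)"
  proof
    show "\<psi> ` carrier (wr n k) \<subseteq> carrier (wr n k)" using psic by blast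
  next
    show "carrier (wr n k) \<subseteq> \<psi> ` carrier (wr n k)"
    proof
      fix y assume y: "y \<in> carrier (wr n k)"
      then have y': "y \<in> carrier (wr (s*n) k)" using csub by auto
      define x where "x = \<phi>i y"
      have x: "x \<in> carrier (wr (s*n) k)" "\<phi> x = y"
        using y' imp unfolding x_def \<phi>i_def by (auto intro: inv_into_into f_inv_into_f)
      have "\<psi> (Red n x) = y" using c1[OF x(1)] x(2) y by (simp add: Red_id)
      then show "y \<in> \<psi> ` carrier (wr n k)" using Red_carrier[OF n x(1)] by blast
    qed
  qed
  have psiiso: "\<psi> \<in> iso (wr n k) (wr n k)"
    using psihom psiinj psisurj by (simp add: iso_iff)
  have c2: "red n (tors \<phi> \<sigma>) = tors \<psi> (red n \<sigma>)" if "\<sigma> \<in> sigma (s * n) k" for \<sigma>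
  proof -
    have "(\<sigma>, (\<lambda>i. 0)) \<in> carrier (wr (s*n) k)" using that by (simp add: wr_carrier zk_zero)
    from c1[OF this] have "fst (Red n (\<phi> (\<sigma>, (\<lambda>i. 0)))) = fst (\<psi> (Red n (\<sigma>, (\<lambda>i. 0))))"
      by (rule arg_cong)
    then show ?thesis by (simp add: tors_def Red_def)
  qed
  have c3: "bar \<phi> z = bar \<psi> z" for z
    by (simp add: bar_def \<psi>_def Red_def)
  define rG where "rG = twisted_conj (wr (s*n) k) \<phi>"
  define rH where "rH = twisted_conj (wr n k) \<psi>"
  have eqH: "equiv (carrier (wr n k)) rH"
    unfolding rH_def by (rule twisted_equiv[OF wr_group[OF n] psihom])
  have compat: "(Red n g1, Red n g2) \<in> rH" if rel: "(g1, g2) \<in> rG" for g1 g2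
  proof -
    obtain h where g1: "g1 \<in> carrier (wr (s*n) k)" and g2: "g2 \<in> carrier (wr (s*n) k)"
      and h: "h \<in> carrier (wr (s*n) k)"
      and e: "g1 = h \<otimes>\<^bsub>wr (s*n) k\<^esub> g2 \<otimes>\<^bsub>wr (s*n) k\<^esub> inv\<^bsub>wr (s*n) k\<^esub> (\<phi> h)"
    proof -
      have "g1 \<in> carrier (wr (s*n) k) \<and> g2 \<in> carrier (wr (s*n) k) \<and> (\<exists>h\<in>carrier (wr (s*n) k).
          g1 = h \<otimes>\<^bsub>wr (s*n) k\<^esub> g2 \<otimes>\<^bsub>wr (s*n) k\<^esub> inv\<^bsub>wr (s*n) k\<^esub> (\<phi> h))"
        using rel unfolding rG_def twisted_conj_def by simp
      then show ?thesis using that by blast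
    qed
    have "Red n g1 = Red n h \<otimes>\<^bsub>wr n k\<^esub> Red n g2 \<otimes>\<^bsub>wr n k\<^esub> inv\<^bsub>wr n k\<^esub> (Red n (\<phi> h))"
      using g2 h pc[OF h] by (simp add: e)
    also have "\<dots> = Red n h \<otimes>\<^bsub>wr n k\<^esub> Red n g2 \<otimes>\<^bsub>wr n k\<^esub> inv\<^bsub>wr n k\<^esub> (\<psi> (Red n h))"
      using c1[OF h] by simp
    finally show ?thesis unfolding rH_def twisted_conj_def
      using g1 g2 h Red_carrier[OF n g1] Red_carrier[OF n g2] Red_carrier[OF n h]
      by (auto intro!: bexI[where x="Red n h"])
  qed
  define F where "F = (\<lambda>C. rH `` (Red n ` C))"
  have Fcls: "F (rG `` {g}) = rH `` {Red n g}" if g: "g \<in> carrier (wr (s*n) k)" for g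
  proof
    show "F (rG `` {g}) \<subseteq> rH `` {Red n g}"
    proof
      fix w assume "w \<in> F (rG `` {g})"
      then obtain g' where "(g, g') \<in> rG" "(Red n g', w) \<in> rH" unfolding F_def by auto
      then have "(Red n g, Red n g') \<in> rH" "(Red n g', w) \<in> rH" using compat by auto
      then show "w \<in> rH `` {Red n g}" using eqH unfolding equiv_def trans_def by blast
    qed
  next
    have "(g, g) \<in> rG" using twisted_equiv[OF wr_group[OF sn] phi] g
      unfolding rG_def equiv_def refl_on_def by blast
    then show "rH `` {Red n g} \<subseteq> F (rG `` {g})" unfolding F_def by auto
  qed
  have sub: "carrier (wr n k) // rH \<subseteq> F ` (carrier (wr (s*n) k) // rG)"
  proof
    fix C assume "C \<in> carrier (wr n k) // rH"
    then obtain y where y: "y \<in> carrier (wr n k)" and C: "C = rH `` {y}" by (auto elim: quotientE)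
    have y': "y \<in> carrier (wr (s*n) k)" using y csub by auto
    have "C = F (rG `` {y})" using Fcls[OF y'] C Red_id[OF y] by simp
    moreover have "rG `` {y} \<in> carrier (wr (s*n) k) // rG" using y' by (rule quotientI)
    ultimately show "C \<in> F ` (carrier (wr (s*n) k) // rG)" by blast
  qed
  have R: "reidemeister (wr (s * n) k) \<phi> \<ge> reidemeister (wr n k) \<psi>"
  proof (cases "finite (carrier (wr (s*n) k) // rG)")
    case True
    then have fin: "finite (carrier (wr n k) // rH)" using sub finite_subset by blast
    have "card (carrier (wr n k) // rH) \<le> card (F ` (carrier (wr (s*n) k) // rG))"
      using sub True by (intro card_mono) auto
    also have "\<dots> \<le> card (carrier (wr (s*n) k) // rG)" by (rule card_image_le[OF True])
    finally show ?thesis using True fin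
      unfolding reidemeister_def Let_def rG_def[symmetric] rH_def[symmetric] by simp
  next
    case False
    then show ?thesis unfolding reidemeister_def Let_def rG_def[symmetric] by simp
  qed
  show ?thesis
    using psiiso c1 c2 c3 R by blast
qed

end
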